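(* Let $\Lambda$ be a finite or countable alphabet and $\mu$ a shift-invariant probability measure on $\Lambda^{\mathbb N}$ such that $(\Lambda^{\mathbb N},\mu,\sigma)$ is mixing of all orders but $\mu$ is not a Bernoulli (i.i.d. product) measure. Then there exist $k\ge2$, a block $B\in\Lambda^k$ and a vector $\bar p_0\in\mathbb N_0^{k-1}$ such that $\mu([B^{\bar q}])<\mu([B^{\bar p_0}])$ for all $\bar q\in\mathbb N_0^{k-1}$ with $\bar q\succ\bar p_0$.
   Context: For $B=(b_1,\dots,b_k)$ and $\bar p=(p_1,\dots,p_{k-1})\in\mathbb N_0^{k-1}$, $B^{\bar p}=(b_1,*^{p_1},b_2,*^{p_2},\dots,b_{k-1},*^{p_{k-1}},b_k)$, and $[B^{\bar p}]$ is the set of $z\in\Lambda^{\mathbb N}$ with $z_{n_i}=b_i$ for $i=1,\dots,k$, where $n_i=i+p_1+\dots+p_{i-1}$ (other coordinates arbitrary). On $\mathbb N_0^{k-1}$, $\bar p\prec\bar q$ means $p_i\le q_i$ for all $i$ with strict inequality for at least one $i$. Mixing of all orders: for all measurable $A_0,\dots,A_k$, $\mu(A_0\cap\sigma^{-n_1}A_1\cap\sigma^{-n_1-n_2}A_2\cap\dots\cap\sigma^{-n_1-\dots-n_k}A_k)\to\mu(A_0)\cdots\mu(A_k)$ as $n_1,\dots,n_k\to\infty$. A Bernoulli measure satisfies $\mu([b_1\dots b_k])=\mu([b_1])\cdots\mu([b_k])$ for all blocks. *)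

theory Defs
  imports "HOL-Probability.Probability"
begin

text \<open>Sequence space Lambda^N as functions nat => 'a, with the product sigma-algebra
  of the discrete sigma-algebras. Coordinates are 0-indexed (z 0 is the paper's z_1).\<close>

definition seq_space :: "(nat \<Rightarrow> 'a) measure" where
  "seq_space = PiM UNIV (\<lambda>_. count_space UNIV)"

definition shift :: "(nat \<Rightarrow> 'a) \<Rightarrow> (nat \<Rightarrow> 'a)" where
  "shift z = (\<lambda>n. z (Suc n))"

definition shift_invariant :: "(nat \<Rightarrow> 'a) measure \<Rightarrow> bool" where
  "shift_invariant M \<longleftrightarrow> (\<forall>A\<in>sets M. measure M (shift -` A \<inter> space M) = measure M A)"

definition mixing_all_orders :: "(nat \<Rightarrow> 'a) measure \<Rightarrow> bool" where
  "mixing_all_orders M \<longleftrightarrow>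
     (\<forall>k::nat. \<forall>A::nat \<Rightarrow> (nat \<Rightarrow> 'a) set. (\<forall>i\<le>k. A i \<in> sets M) \<longrightarrow>
       (\<forall>\<epsilon>>0. \<exists>N. \<forall>n::nat \<Rightarrow> nat. (\<forall>i\<in>{1..k}. N \<le> n i) \<longrightarrow>
          \<bar>measure M (\<Inter>i\<in>{..k}. (shift ^^ (\<Sum>j\<in>{1..i}. n j)) -` A i \<inter> space M)
             - (\<Prod>i\<in>{..k}. measure M (A i))\<bar> < \<epsilon>))"

definition cyl :: "'a list \<Rightarrow> (nat \<Rightarrow> 'a) set" where
  "cyl bs = {z. \<forall>i<length bs. z i = bs ! i}"

definition bernoulli_measure :: "(nat \<Rightarrow> 'a) measure \<Rightarrow> bool" where
  "bernoulli_measure M \<longleftrightarrow>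
     (\<forall>bs. measure M (cyl bs) = (\<Prod>i<length bs. measure M (cyl [bs ! i])))"

text \<open>Gapped cylinder [B^p]: with 0-indexed i, the symbol B!i sits at position
  i + p!0 + ... + p!(i-1) (0-indexed), i.e. the paper's n_i shifted by one.\<close>
definition gcyl :: "'a list \<Rightarrow> nat list \<Rightarrow> (nat \<Rightarrow> 'a) set" where
  "gcyl B p = {z. \<forall>i<length B. z (i + (\<Sum>j<i. p ! j)) = B ! i}"

definition vec_prec :: "nat list \<Rightarrow> nat list \<Rightarrow> bool" where
  "vec_prec p q \<longleftrightarrow> length p = length q \<and> (\<forall>i<length p. p ! i \<le> q ! i)
      \<and> (\<exists>i<length p. p ! i < q ! i)"

end

theory Submission
  imports Defs
begin

definition pos :: "nat list \<Rightarrow> nat \<Rightarrow> nat" where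
  "pos q i = i + (\<Sum>j<i. q ! j)"

definition pc :: "(nat \<Rightarrow> nat) \<Rightarrow> (nat \<Rightarrow> 'a) \<Rightarrow> nat \<Rightarrow> (nat \<Rightarrow> 'a) set" where
  "pc a w k = {z. \<forall>i<k. z (a i) = w i}"

lemma space_seq: "space seq_space = UNIV"
  unfolding seq_space_def space_PiM by auto

lemma pc_sets: "pc a w k \<in> sets seq_space"
proof -
  have m: "\<And>j. (\<lambda>z. z j) \<in> measurable seq_space (count_space UNIV)"
    unfolding seq_space_def by (rule measurable_component_singleton) auto
  have e: "\<And>i. {z\<in>space seq_space. z (a i) = w i} = (\<lambda>z. z (a i)) -` {w i} \<inter> space seq_space"
    by auto
  have "pc a w k = {z\<in>space seq_space. \<forall>i\<in>{..<k}. z (a i) = w i}"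
    unfolding pc_def space_seq by auto
  also have "\<dots> \<in> sets seq_space"
  proof (intro sets.sets_Collect_finite_All)
    fix i
    have "(\<lambda>z. z (a i)) -` {w i} \<inter> space seq_space \<in> sets seq_space"
      by (rule measurable_sets[OF m]) simp
    then show "{z\<in>space seq_space. z (a i) = w i} \<in> sets seq_space" by (simp only: e)
  qed simp
  finally show ?thesis .
qed

lemma shift_pow: "(shift ^^ m) z = (\<lambda>t. z (t + m))"
  by (induction m arbitrary: z) (auto simp: shift_def)

lemma gcyl_pc: "gcyl B p = pc (pos p) (\<lambda>i. B ! i) (length B)"
  unfolding gcyl_def pc_def pos_def by auto

lemma cyl_pc: "cyl bs = pc (\<lambda>i. i) (\<lambda>i. bs ! i) (length bs)"
  unfolding cyl_def pc_def by auto

lemma pos_Suc: "pos q (Suc i) = pos q i + 1 + q ! i"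
  unfolding pos_def by simp

lemma pos_mono: "i \<le> j \<Longrightarrow> pos q i + (j - i) \<le> pos q j"
proof (induction j)
  case 0 then show ?case by simp
next
  case (Suc j) then show ?case by (cases "i = Suc j") (auto simp: pos_Suc)
qed

lemma pos_less: "i < j \<Longrightarrow> pos q i < pos q j"
  using pos_mono[of i j q] by simp

lemma pos_0[simp]: "pos q 0 = 0" unfolding pos_def by simp

definition Good :: "(nat \<Rightarrow> 'a) measure \<Rightarrow> nat \<Rightarrow> bool" where
  "Good M k \<longleftrightarrow> (\<forall>a w. a 0 = 0 \<longrightarrow> (\<forall>i j. i < j \<longrightarrow> j < k \<longrightarrow> a i < a j) \<longrightarrow>
     measure M (pc a w k) = (\<Prod>i<k. measure M (cyl [w i])))"

lemma pcM: "sets M = sets seq_space \<Longrightarrow> pc a w k \<in> sets M"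
  using pc_sets by simp

lemma spaceM: "sets M = sets seq_space \<Longrightarrow> space M = UNIV"
  using sets_eq_imp_space_eq space_seq by metis

lemma Good0: "prob_space M \<Longrightarrow> sets M = sets seq_space \<Longrightarrow> Good M 0"
  unfolding Good_def
proof (intro allI impI)
  fix a w assume "prob_space M" "sets M = sets seq_space"
  then have "pc a w 0 = space M" using spaceM unfolding pc_def by blast
  then show "measure M (pc a w 0) = (\<Prod>i<0. measure M (cyl [w i]))"
    using prob_space.prob_space[OF \<open>prob_space M\<close>] by simp
qed

lemma Good1: "Good (M :: (nat \<Rightarrow> 'a) measure) 1"
  unfolding Good_def
proof (intro allI impI)
  fix a :: "nat \<Rightarrow> nat" and w :: "nat \<Rightarrow> 'a" assume "a 0 = 0"
  then have "pc a w 1 = cyl [w 0]" unfolding pc_def cyl_def by auto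
  then show "measure M (pc a w 1) = (\<Prod>i<1. measure M (cyl [w i]))" by simp
qed

lemma notGood: "\<not> bernoulli_measure (M :: (nat \<Rightarrow> 'a) measure) \<Longrightarrow> \<exists>k. \<not> Good M k"
proof -
  assume "\<not> bernoulli_measure M"
  then obtain bs where ne: "measure M (cyl bs) \<noteq> (\<Prod>i<length bs. measure M (cyl [bs ! i]))"
    unfolding bernoulli_measure_def by blast
  have "\<not> Good M (length bs)"
  proof
    assume G: "Good M (length bs)"
    have "measure M (pc (\<lambda>i. i) (\<lambda>i. bs ! i) (length bs)) = (\<Prod>i<length bs. measure M (cyl [bs ! i]))"
      using G[unfolded Good_def, rule_format, of "\<lambda>i. i" "\<lambda>i. bs ! i"] by simp
    then show False using ne cyl_pc[of bs] by simp
  qed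
  then show ?thesis by blast
qed

lemma count_sum:
  fixes D :: "'a::countable \<Rightarrow> 'b set"
  assumes "finite_measure M" "\<And>c. D c \<in> sets M" "disjoint_family D"
  shows "(\<lambda>n. if n \<in> range (to_nat :: 'a \<Rightarrow> nat) then measure M (D (from_nat n)) else 0) sums measure M (\<Union>c. D c)"
proof -
  define X where "X n = (if n \<in> range (to_nat :: 'a \<Rightarrow> nat) then D (from_nat n) else {})" for n
  have U: "(\<Union>n. X n) = (\<Union>c. D c)"
    unfolding X_def by (auto split: if_splits)
  have dj: "disjoint_family X"
    unfolding disjoint_family_on_def
  proof (intro ballI impI)
    fix m n :: nat assume mn: "m \<noteq> n"
    show "X m \<inter> X n = {}"
    proof (cases "m \<in> range (to_nat :: 'a \<Rightarrow> nat) \<and> n \<in> range (to_nat :: 'a \<Rightarrow> nat)")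
      case True
      then obtain x y :: 'a where xy: "m = to_nat x" "n = to_nat y" by blast
      with mn have "x \<noteq> y" by auto
      then have "D x \<inter> D y = {}" using assms(3) unfolding disjoint_family_on_def by blast
      then show ?thesis unfolding X_def xy by simp
    next
      case False then show ?thesis unfolding X_def by auto
    qed
  qed
  have "(\<lambda>n. measure M (X n)) sums measure M (\<Union>n. X n)"
  proof (rule measure_UNION[OF _ dj])
    show "range X \<subseteq> sets M" unfolding X_def using assms(2) by auto
    show "emeasure M (\<Union>n. X n) \<noteq> \<infinity>" using finite_measure.emeasure_finite[OF assms(1)] by simp
  qed
  moreover have "(\<lambda>n. measure M (X n)) = (\<lambda>n. if n \<in> range (to_nat :: 'a \<Rightarrow> nat) then measure M (D (from_nat n)) else 0)"
  proof (rule ext)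
    fix n show "measure M (X n) = (if n \<in> range (to_nat :: 'a \<Rightarrow> nat) then measure M (D (from_nat n)) else 0)"
    proof (cases "n \<in> range (to_nat :: 'a \<Rightarrow> nat)")
      case True then show ?thesis by (simp only: X_def if_P[OF True] if_True)
    next
      case False then show ?thesis by (simp only: X_def if_not_P[OF False] if_False measure_empty)
    qed
  qed
  ultimately show ?thesis unfolding U by (simp only:)
qed

lemma bigger:
  fixes M :: "(nat \<Rightarrow> 'a::countable) measure"
  assumes P: "prob_space M" and S: "sets M = sets seq_space"
    and G: "Good M (k - 1)" and NG: "\<not> Good M k" and k1: "k \<ge> 1"
  shows "\<exists>a w. a 0 = 0 \<and> (\<forall>i j. i < j \<longrightarrow> j < k \<longrightarrow> a i < a j) \<and>
           measure M (pc a w k) > (\<Prod>i<k. measure M (cyl [w i]))"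
proof (rule ccontr)
  assume nb: "\<not> ?thesis"
  obtain k' where k': "k = Suc k'" using k1 by (cases k) auto
  from NG obtain a w where a0: "a 0 = 0" and am: "\<forall>i j. i < j \<longrightarrow> j < k \<longrightarrow> a i < a j"
    and ne: "measure M (pc a w k) \<noteq> (\<Prod>i<k. measure M (cyl [w i]))"
    unfolding Good_def by blast
  define P where "P = (\<Prod>i<k'. measure M (cyl [w i]))"
  define D where "D c = pc a (w(k' := c)) k" for c
  have pr: "(\<Prod>i<k. measure M (cyl [(w(k' := c)) i])) = P * measure M (cyl [c])" for c
  proof -
    have "(\<Prod>i<k. measure M (cyl [(w(k' := c)) i])) = (\<Prod>i<k'. measure M (cyl [(w(k' := c)) i])) * measure M (cyl [c])"
      unfolding k' by simp
    also have "(\<Prod>i<k'. measure M (cyl [(w(k' := c)) i])) = P"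
      unfolding P_def by (intro prod.cong) auto
    finally show ?thesis .
  qed
  have le: "measure M (D c) \<le> P * measure M (cyl [c])" for c
  proof -
    have "\<not> measure M (pc a (w(k' := c)) k) > (\<Prod>i<k. measure M (cyl [(w(k' := c)) i]))"
      using nb a0 am by blast
    then show ?thesis using pr[of c] unfolding D_def by linarith
  qed
  have wk: "w(k' := w k') = w" by simp
  have lt: "measure M (D (w k')) < P * measure M (cyl [w k'])"
    using le[of "w k'"] ne pr[of "w k'"] unfolding D_def wk by linarith
  have U: "(\<Union>c. D c) = pc a w k'"
  proof
    show "(\<Union>c. D c) \<subseteq> pc a w k'" unfolding D_def pc_def k' by auto
    show "pc a w k' \<subseteq> (\<Union>c. D c)"
    proof
      fix z assume z: "z \<in> pc a w k'"
      have "z \<in> D (z (a k'))"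
        unfolding D_def pc_def k'
      proof (intro CollectI allI impI)
        fix i assume "i < Suc k'"
        then show "z (a i) = (w(k' := z (a k'))) i"
          using z unfolding pc_def by (cases "i = k'") auto
      qed
      then show "z \<in> (\<Union>c. D c)" by blast
    qed
  qed
  have dj: "disjoint_family D"
    unfolding disjoint_family_on_def D_def pc_def k' by auto
  have fm: "finite_measure M" using P by (simp add: prob_space_def)
  have PU: "measure M (pc a w k') = P"
    using G a0 am k' unfolding Good_def P_def by simp
  have s1: "(\<lambda>n. if n \<in> range (to_nat :: 'a \<Rightarrow> nat) then measure M (D (from_nat n)) else 0) sums P"
    using count_sum[OF fm, of D] dj pcM[OF S] U PU unfolding D_def by simp
  have U2: "(\<Union>c. cyl [c]) = space M" using spaceM[OF S] unfolding cyl_def by auto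
  have dj2: "disjoint_family (\<lambda>c. cyl [c])"
    unfolding disjoint_family_on_def cyl_def by auto
  have cs: "\<And>c. cyl [c] \<in> sets M" unfolding cyl_pc using pcM[OF S] by simp
  have s2: "(\<lambda>n. if n \<in> range (to_nat :: 'a \<Rightarrow> nat) then measure M (cyl [from_nat n]) else 0) sums 1"
    using count_sum[OF fm, of "\<lambda>c. cyl [c]", OF cs dj2] U2 prob_space.prob_space[OF P]
    by simp
  define g where "g = (\<lambda>n. P * (if n \<in> range (to_nat :: 'a \<Rightarrow> nat) then measure M (cyl [from_nat n]) else 0)
         - (if n \<in> range (to_nat :: 'a \<Rightarrow> nat) then measure M (D (from_nat n)) else 0))"
  have "g sums (P * 1 - P)"
    unfolding g_def by (intro sums_diff sums_mult s1 s2)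
  then have sg: "g sums 0" by simp
  have g0: "0 \<le> g n" for n
  proof (cases "n \<in> range (to_nat :: 'a \<Rightarrow> nat)")
    case True then show ?thesis using le[of "from_nat n"] by (simp only: g_def if_P[OF True]) simp
  next
    case False then show ?thesis by (simp only: g_def if_not_P[OF False]) simp
  qed
  have rr: "to_nat (w k') \<in> range (to_nat :: 'a \<Rightarrow> nat)" by simp
  then have gp: "0 < g (to_nat (w k'))" using lt by (simp only: g_def if_P[OF rr]) simp
  have "0 < suminf g" using suminf_pos_iff[OF sums_summable[OF sg] g0] gp by blast
  moreover have "suminf g = 0" using sums_unique[OF sg] by simp
  ultimately show False by simp
qed

lemma pc_cong: "(\<And>i. i < k \<Longrightarrow> a i = a' i \<and> w i = w' i) \<Longrightarrow> pc a w k = pc a' w' k"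
  unfolding pc_def by auto

lemma conv:
  assumes a0: "a 0 = 0" and am: "\<forall>i j. i < j \<longrightarrow> j < k \<longrightarrow> a i < a j" and i: "i < k"
  shows "pos (map (\<lambda>j. a (Suc j) - a j - 1) [0..<k-1]) i = a i"
  using i
proof (induction i)
  case 0 then show ?case using a0 by simp
next
  case (Suc i)
  then have "a i < a (Suc i)" using am by auto
  moreover have "i < k - 1" using Suc by simp
  ultimately show ?case using Suc by (simp add: pos_Suc)
qed

lemma F1: fixes b :: "nat \<Rightarrow> nat"
  shows "b 0 \<le> l \<Longrightarrow> l < b (Suc m) \<Longrightarrow> \<exists>i\<le>m. b i \<le> l \<and> l < b (Suc i)"
proof (induction m)
  case 0 then show ?case by auto
next
  case (Suc m)
  show ?case
  proof (cases "l < b (Suc m)")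
    case True then show ?thesis using Suc by (meson le_Suc_eq)
  next
    case False then show ?thesis using Suc by (intro exI[of _ "Suc m"]) auto
  qed
qed

lemma posdiff:
  "b \<le> l \<Longrightarrow> (\<And>j. b \<le> j \<Longrightarrow> j < l \<Longrightarrow> q ! j = c ! j) \<Longrightarrow> pos q l + pos c b = pos c l + pos q b"
proof (induction l)
  case 0 then show ?case by simp
next
  case (Suc l)
  show ?case
  proof (cases "b = Suc l")
    case True then show ?thesis by simp
  next
    case False
    then have "b \<le> l" using Suc by simp
    then show ?thesis using Suc by (simp add: pos_Suc)
  qed
qed

lemma prod_blocks:
  fixes g :: "nat \<Rightarrow> real"
  shows "b 0 = 0 \<Longrightarrow> (\<And>i. i < m \<Longrightarrow> b i \<le> b (Suc i)) \<Longrightarrow>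
    (\<Prod>i<m. \<Prod>l\<in>{b i..<b (Suc i)}. g l) = (\<Prod>l<b m. g l)"
proof (induction m)
  case 0 then show ?case by simp
next
  case (Suc m)
  have "b m \<le> b (Suc m)" using Suc by simp
  then have "(\<Prod>l<b (Suc m). g l) = (\<Prod>l<b m. g l) * (\<Prod>l\<in>{b m..<b (Suc m)}. g l)"
    unfolding lessThan_atLeast0 by (simp add: prod.atLeastLessThan_concat)
  then show ?case using Suc by simp
qed

lemma bnd_exists:
  assumes k2: "k \<ge> 2" and T: "T \<subseteq> {..<k-1}" "T \<noteq> {}"
  shows "\<exists>b m. m \<ge> 1 \<and> b 0 = 0 \<and> b (Suc m) = k \<and> (\<forall>i j. i < j \<longrightarrow> j \<le> Suc m \<longrightarrow> b i < b j)
     \<and> (\<forall>i. 1 \<le> i \<longrightarrow> i \<le> m \<longrightarrow> b i - 1 \<in> T)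
     \<and> (\<forall>i j. i \<le> m \<longrightarrow> b i \<le> j \<longrightarrow> Suc j < b (Suc i) \<longrightarrow> j \<notin> T)"
proof -
  define S where "S = insert 0 (insert k (Suc ` T))"
  have fT: "finite T" using T finite_subset by blast
  have fS: "finite S" using fT unfolding S_def by simp
  define xs where "xs = sorted_list_of_set S"
  have sx: "set xs = S" using fS unfolding xs_def by simp
  have st: "sorted_wrt (<) xs" unfolding xs_def strict_sorted_iff by simp
  have lx: "length xs = card S" unfolding xs_def by simp
  obtain t where t: "t \<in> T" using T by blast
  have "{0, k, Suc t} \<subseteq> S" unfolding S_def using t by auto
  moreover have "card {0, k, Suc t} = 3" using t T k2 by auto
  ultimately have c3: "card S \<ge> 3" using card_mono[OF fS, of "{0, k, Suc t}"] by linarith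
  define m where "m = length xs - 2"
  have lm: "length xs = Suc (Suc m)" and m1: "m \<ge> 1" using c3 lx unfolding m_def by auto
  have smono: "\<And>i j. i < j \<Longrightarrow> j \<le> Suc m \<Longrightarrow> xs ! i < xs ! j"
    using sorted_wrt_nth_less[OF st] lm by simp
  have sle: "\<And>i j. i \<le> j \<Longrightarrow> j \<le> Suc m \<Longrightarrow> xs ! i \<le> xs ! j"
    using smono by (metis order.order_iff_strict)
  have inS: "\<And>i. i \<le> Suc m \<Longrightarrow> xs ! i \<in> S" using nth_mem[of _ xs] sx lm by simp
  have Sle: "\<And>x. x \<in> S \<Longrightarrow> x \<le> k" unfolding S_def using T by auto
  have b0: "xs ! 0 = 0"
  proof -
    have "0 \<in> set xs" using sx unfolding S_def by simp
    then obtain j where j: "j < length xs" "xs ! j = 0" by (metis in_set_conv_nth)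
    then show ?thesis using sle[of 0 j] lm by simp
  qed
  have bk: "xs ! Suc m = k"
  proof -
    have "k \<in> set xs" using sx unfolding S_def by simp
    then obtain j where j: "j < length xs" "xs ! j = k" by (metis in_set_conv_nth)
    then show ?thesis using sle[of j "Suc m"] lm Sle[OF inS[of "Suc m"]] by simp
  qed
  have bT: "xs ! i - 1 \<in> T" if "1 \<le> i" "i \<le> m" for i
  proof -
    have "xs ! 0 < xs ! i" "xs ! i < xs ! Suc m" using smono that by auto
    then have "xs ! i \<noteq> 0" "xs ! i \<noteq> k" using b0 bk by auto
    moreover have "xs ! i \<in> S" using inS that by simp
    ultimately show ?thesis unfolding S_def by auto
  qed
  have bg: "j \<notin> T" if "i \<le> m" "xs ! i \<le> j" "Suc j < xs ! Suc i" for i j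
  proof
    assume "j \<in> T"
    then have "Suc j \<in> set xs" using sx unfolding S_def by simp
    then obtain r where r: "r < length xs" "xs ! r = Suc j" by (metis in_set_conv_nth)
    have "\<not> r \<le> i" using sle[of r i] that r by auto
    moreover have "\<not> Suc i \<le> r" using sle[of "Suc i" r] that r lm by auto
    ultimately show False by simp
  qed
  show ?thesis
    apply (rule exI[of _ "\<lambda>i. xs ! i"], rule exI[of _ m])
    apply (intro conjI allI impI)
         apply (rule m1)
        apply (rule b0)
       apply (rule bk)
      apply (erule (1) smono)
     apply (erule (1) bT)
    apply (erule (2) bg)
    done
qed

lemma limit:
  fixes M :: "(nat \<Rightarrow> 'a) measure" and Q :: "nat \<Rightarrow> nat list" and B :: "'a list"
  assumes S: "sets M = sets seq_space" and mix: "mixing_all_orders M"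
    and G: "\<And>k'. k' < k \<Longrightarrow> Good M k'"
    and kB: "length B = k" and k2: "k \<ge> 2"
    and T: "T \<subseteq> {..<k-1}" "T \<noteq> {}"
    and const: "\<And>n j. n \<ge> n0 \<Longrightarrow> j < k-1 \<Longrightarrow> j \<notin> T \<Longrightarrow> Q n ! j = Q n0 ! j"
    and inf: "\<And>j N. j \<in> T \<Longrightarrow> eventually (\<lambda>n. N \<le> Q n ! j) sequentially"
    and e: "e > 0"
  shows "\<exists>n. \<bar>measure M (gcyl B (Q n)) - (\<Prod>l<k. measure M (cyl [B ! l]))\<bar> < e"
proof -
  obtain b m where m1: "m \<ge> 1" and b0: "b 0 = 0" and bk: "b (Suc m) = k"
    and bs: "\<And>i j. i < j \<Longrightarrow> j \<le> Suc m \<Longrightarrow> b i < b j"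
    and bT: "\<And>i. 1 \<le> i \<Longrightarrow> i \<le> m \<Longrightarrow> b i - 1 \<in> T"
    and bg: "\<And>i j. i \<le> m \<Longrightarrow> b i \<le> j \<Longrightarrow> Suc j < b (Suc i) \<Longrightarrow> j \<notin> T"
    using bnd_exists[OF k2 T] by blast
  define c where "c = Q n0"
  define A where "A i = pc (\<lambda>l'. pos c (b i + l') - pos c (b i)) (\<lambda>l'. B ! (b i + l')) (b (Suc i) - b i)" for i
  have Asets: "\<And>i. A i \<in> sets M" using pcM[OF S] by (simp add: A_def)
  have bk': "b (Suc i) \<le> k" if "i \<le> m" for i
  proof (cases "i = m")
    case True then show ?thesis using bk by simp
  next
    case False then show ?thesis using bs[of "Suc i" "Suc m"] that bk by simp
  qed
  have bmono: "\<And>i. i < Suc m \<Longrightarrow> b i \<le> b (Suc i)" using bs by (simp add: less_imp_le)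
  have Ameas: "measure M (A i) = (\<Prod>l\<in>{b i..<b (Suc i)}. measure M (cyl [B ! l]))" if i: "i \<le> m" for i
  proof -
    have lt: "b (Suc i) - b i < k"
    proof (cases "i = 0")
      case True then show ?thesis using bs[of 1 "Suc m"] m1 bk b0 by simp
    next
      case False
      then have "0 < b i" using bs[of 0 i] i b0 by simp
      then show ?thesis using bk'[OF i] k2 by arith
    qed
    have GG: "Good M (b (Suc i) - b i)" using G lt .
    have z0: "(\<lambda>l'. pos c (b i + l') - pos c (b i)) 0 = 0" by simp
    have st: "\<forall>i1 j1. i1 < j1 \<longrightarrow> j1 < b (Suc i) - b i \<longrightarrow>
        (\<lambda>l'. pos c (b i + l') - pos c (b i)) i1 < (\<lambda>l'. pos c (b i + l') - pos c (b i)) j1"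
    proof (intro allI impI)
      fix i1 j1 :: nat assume "i1 < j1"
      then have "pos c (b i + i1) < pos c (b i + j1)" by (intro pos_less) simp
      moreover have "pos c (b i) \<le> pos c (b i + i1)" using pos_mono[of "b i" "b i + i1" c] by simp
      ultimately show "(\<lambda>l'. pos c (b i + l') - pos c (b i)) i1 < (\<lambda>l'. pos c (b i + l') - pos c (b i)) j1"
        by simp
    qed
    have "measure M (A i) = (\<Prod>l'<b (Suc i) - b i. measure M (cyl [B ! (b i + l')]))"
      unfolding A_def
      using GG[unfolded Good_def, rule_format, of "\<lambda>l'. pos c (b i + l') - pos c (b i)" "\<lambda>l'. B ! (b i + l')", OF z0 st[rule_format]] .
    also have "\<dots> = (\<Prod>l\<in>{b i..<b (Suc i)}. measure M (cyl [B ! l]))"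
      using prod.atLeastLessThan_shift_0[of "\<lambda>l. measure M (cyl [B ! l])" "b i" "b (Suc i)"]
      by (simp add: lessThan_atLeast0 comp_def add.commute)
    finally show ?thesis .
  qed
  have prodA: "(\<Prod>i\<in>{..m}. measure M (A i)) = (\<Prod>l<k. measure M (cyl [B ! l]))"
  proof -
    have "(\<Prod>i\<in>{..m}. measure M (A i)) = (\<Prod>i<Suc m. \<Prod>l\<in>{b i..<b (Suc i)}. measure M (cyl [B ! l]))"
      unfolding lessThan_Suc_atMost by (intro prod.cong) (auto simp: Ameas)
    also have "\<dots> = (\<Prod>l<b (Suc m). measure M (cyl [B ! l]))"
      by (rule prod_blocks[OF b0 bmono])
    finally show ?thesis using bk by simp
  qed
  from mix[unfolded mixing_all_orders_def, rule_format, of m A e] Asets e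
  obtain N where N: "\<And>nn. (\<forall>i\<in>{1..m}. N \<le> nn i) \<Longrightarrow>
      \<bar>measure M (\<Inter>i\<in>{..m}. (shift ^^ (\<Sum>j\<in>{1..i}. nn j)) -` A i \<inter> space M) - (\<Prod>i\<in>{..m}. measure M (A i))\<bar> < e"
    by blast
  have fT: "finite T" using T(1) finite_subset by blast
  have "eventually (\<lambda>n. \<forall>j\<in>T. N \<le> Q n ! j) sequentially"
    using fT inf by (intro eventually_ball_finite) auto
  moreover have "eventually (\<lambda>n. n0 \<le> n) sequentially" by (rule eventually_ge_at_top)
  ultimately have "eventually (\<lambda>n. n0 \<le> n \<and> (\<forall>j\<in>T. N \<le> Q n ! j)) sequentially"
    by (rule eventually_conj[rotated])
  then obtain n where n0n: "n0 \<le> n" and nN: "\<And>j. j \<in> T \<Longrightarrow> N \<le> Q n ! j"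
    unfolding eventually_sequentially by blast
  define q where "q = Q n"
  define nn where "nn i = pos q (b i) - pos q (b (i - 1))" for i
  have sums: "(\<Sum>j\<in>{1..i}. nn j) = pos q (b i)" if "i \<le> Suc m" for i
    using that
  proof (induction i)
    case 0 then show ?case using b0 by simp
  next
    case (Suc i)
    have "b i \<le> b (Suc i)" using bmono Suc by simp
    then have "pos q (b i) \<le> pos q (b (Suc i))" using pos_mono[of "b i" "b (Suc i)" q] by simp
    then show ?case using Suc by (simp add: nn_def)
  qed
  have nnN: "\<forall>i\<in>{1..m}. N \<le> nn i"
  proof
    fix i assume i: "i \<in> {1..m}"
    define t where "t = b i - 1"
    have tT: "t \<in> T" using bT i unfolding t_def by simp
    have "b (i - 1) < b i" using bs[of "i - 1" i] i by simp
    then have bt: "b (i - 1) \<le> t" "b i = Suc t" unfolding t_def by auto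
    have "pos q (b (i - 1)) + (t - b (i - 1)) \<le> pos q t" using pos_mono[OF bt(1)] .
    then have "pos q (b (i - 1)) + q ! t \<le> pos q (b i)" using bt(2) by (simp add: pos_Suc)
    then have "q ! t \<le> nn i" unfolding nn_def by simp
    then show "N \<le> nn i" using nN[OF tT] unfolding q_def by simp
  qed
  have kd: "pos q l + pos c (b i) = pos c l + pos q (b i)"
    if "i \<le> m" "b i \<le> l" "l < b (Suc i)" for i l
  proof (rule posdiff[OF that(2)])
    fix j assume j: "b i \<le> j" "j < l"
    have "j \<notin> T" using bg[of i j] that j by simp
    moreover have "j < k - 1" using j that bk'[OF that(1)] by simp
    ultimately show "q ! j = c ! j" unfolding q_def c_def using const[OF n0n] by simp
  qed
  have spM: "space M = UNIV" using spaceM[OF S] .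
  have seteq: "gcyl B q = (\<Inter>i\<in>{..m}. (shift ^^ (\<Sum>j\<in>{1..i}. nn j)) -` A i \<inter> space M)"
  proof (intro set_eqI iffI)
    fix z assume z: "z \<in> gcyl B q"
    then have zl: "\<And>l. l < k \<Longrightarrow> z (pos q l) = B ! l" unfolding gcyl_pc pc_def kB by simp
    show "z \<in> (\<Inter>i\<in>{..m}. (shift ^^ (\<Sum>j\<in>{1..i}. nn j)) -` A i \<inter> space M)"
    proof (intro INT_I IntI)
      fix i assume i: "i \<in> {..m}"
      show "z \<in> space M" using spM by simp
      have si: "(\<Sum>j\<in>{1..i}. nn j) = pos q (b i)" using sums[of i] i by simp
      have "\<forall>l'<b (Suc i) - b i. z (pos c (b i + l') - pos c (b i) + pos q (b i)) = B ! (b i + l')"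
      proof (intro allI impI)
        fix l' assume l': "l' < b (Suc i) - b i"
        define l where "l = b i + l'"
        have ll: "b i \<le> l" "l < b (Suc i)" using l' unfolding l_def by auto
        have "pos c (b i) \<le> pos c l" using pos_mono[OF ll(1), of c] by simp
        then have "pos c l - pos c (b i) + pos q (b i) = pos q l" using kd[of i l] i ll by simp
        moreover have "l < k" using ll bk'[of i] i by simp
        ultimately show "z (pos c (b i + l') - pos c (b i) + pos q (b i)) = B ! (b i + l')"
          using zl unfolding l_def by simp
      qed
      then show "z \<in> (shift ^^ (\<Sum>j\<in>{1..i}. nn j)) -` A i"
        unfolding si A_def pc_def shift_pow by simp
    qed
  next
    fix z assume z: "z \<in> (\<Inter>i\<in>{..m}. (shift ^^ (\<Sum>j\<in>{1..i}. nn j)) -` A i \<inter> space M)"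
    have zi: "z (pos c (b i + l') - pos c (b i) + pos q (b i)) = B ! (b i + l')"
      if "i \<le> m" "l' < b (Suc i) - b i" for i l'
    proof -
      have "z \<in> (shift ^^ (\<Sum>j\<in>{1..i}. nn j)) -` A i" using z that by blast
      moreover have si: "(\<Sum>j\<in>{1..i}. nn j) = pos q (b i)" using sums[of i] that by simp
      ultimately show ?thesis using that unfolding si A_def pc_def shift_pow by simp
    qed
    show "z \<in> gcyl B q" unfolding gcyl_pc pc_def kB
    proof (intro CollectI allI impI)
      fix l assume l: "l < k"
      obtain i where i: "i \<le> m" "b i \<le> l" "l < b (Suc i)"
        using F1[of b l m] b0 bk l by auto
      have "pos c (b i) \<le> pos c l" using pos_mono[OF i(2), of c] by simp
      then have e1: "pos c l - pos c (b i) + pos q (b i) = pos q l" using kd[OF i] by simp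
      have "z (pos c (b i + (l - b i)) - pos c (b i) + pos q (b i)) = B ! (b i + (l - b i))"
        using zi[of i "l - b i"] i by simp
      then show "z (pos q l) = B ! l" using i e1 by simp
    qed
  qed
  show ?thesis
    using N[OF nnN] unfolding seteq[symmetric] prodA q_def by blast
qed

theorem mainTheorem9:
  fixes M :: "(nat \<Rightarrow> 'a::countable) measure"
  assumes "prob_space M"
    and "sets M = sets seq_space"
    and "shift_invariant M"
    and "mixing_all_orders M"
    and "\<not> bernoulli_measure M"
  shows "\<exists>k\<ge>2. \<exists>B p0. length B = k \<and> length p0 = k - 1 \<and>
           (\<forall>q. length q = k - 1 \<and> vec_prec p0 q \<longrightarrow>
                measure M (gcyl B q) < measure M (gcyl B p0))"
proof -
  note P = assms(1) and S = assms(2) and mix = assms(4)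
  obtain k0 where "\<not> Good M k0" using notGood[OF assms(5)] by blast
  define k where "k = (LEAST k. \<not> Good M k)"
  have NG: "\<not> Good M k" unfolding k_def by (rule LeastI) fact
  have G: "Good M k'" if "k' < k" for k'
    using not_less_Least[of k' "\<lambda>k. \<not> Good M k"] that unfolding k_def by blast
  have k2: "k \<ge> 2"
  proof (rule ccontr)
    assume "\<not> 2 \<le> k"
    then have "k = 0 \<or> k = 1" by arith
    then show False using NG Good0[OF P S] Good1[where M = M] by blast
  qed
  obtain a w where a0: "a 0 = 0" and am: "\<forall>i j. i < j \<longrightarrow> j < k \<longrightarrow> a i < a j"
    and gt: "measure M (pc a w k) > (\<Prod>i<k. measure M (cyl [w i]))"
    using bigger[OF P S G[of "k - 1"] NG] k2 by auto
  define B where "B = map w [0..<k]"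
  define p where "p = map (\<lambda>j. a (Suc j) - a j - 1) [0..<k-1]"
  define f where "f q = measure M (gcyl B q)" for q
  define L where "L = (\<Prod>l<k. measure M (cyl [B ! l]))"
  have lB: "length B = k" unfolding B_def by simp
  have lp: "length p = k - 1" unfolding p_def by simp
  have "gcyl B p = pc a w k"
    unfolding gcyl_pc lB p_def
  proof (rule pc_cong)
    fix i assume i: "i < k"
    show "pos (map (\<lambda>j. a (Suc j) - a j - 1) [0..<k-1]) i = a i \<and> B ! i = w i"
      using conv[OF a0 am i] i unfolding B_def by simp
  qed
  then have fp: "f p = measure M (pc a w k)" unfolding f_def by simp
  have "L = (\<Prod>i<k. measure M (cyl [w i]))"
    unfolding L_def B_def by (intro prod.cong) auto
  then have fpL: "f p > L" using fp gt by simp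
  show ?thesis
  proof (rule ccontr)
    assume H: "\<not> ?thesis"
    have H': "\<exists>q. length q = k - 1 \<and> vec_prec p0 q \<and> f q \<ge> f p0" if "length p0 = k - 1" for p0
    proof -
      have "\<not> (\<forall>q. length q = k - 1 \<and> vec_prec p0 q \<longrightarrow> measure M (gcyl B q) < measure M (gcyl B p0))"
        using H k2 lB that by blast
      then show ?thesis unfolding f_def by (auto simp: not_less)
    qed
    define Q where "Q = rec_nat p (\<lambda>_ x. SOME q. length q = k - 1 \<and> vec_prec x q \<and> f q \<ge> f x)"
    have Q0: "Q 0 = p" unfolding Q_def by simp
    have QS: "Q (Suc n) = (SOME q. length q = k - 1 \<and> vec_prec (Q n) q \<and> f q \<ge> f (Q n))" for n
      unfolding Q_def by simp
    have lenQ: "length (Q n) = k - 1" for n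
    proof (induction n)
      case 0 then show ?case using Q0 lp by simp
    next
      case (Suc n)
      show ?case unfolding QS using someI_ex[OF H'[OF Suc]] by blast
    qed
    have stepQ: "vec_prec (Q n) (Q (Suc n)) \<and> f (Q (Suc n)) \<ge> f (Q n)" for n
      unfolding QS using someI_ex[OF H'[OF lenQ[of n]]] by blast
    have fmono: "f (Q n) \<ge> f p" for n
    proof (induction n)
      case 0 then show ?case using Q0 by simp
    next
      case (Suc n) then show ?case using stepQ[of n] by linarith
    qed
    have cmono: "Q n ! j \<le> Q (Suc n) ! j" if "j < k - 1" for n j
      using stepQ[of n] that lenQ[of n] unfolding vec_prec_def by auto
    have cmono': "Q n ! j \<le> Q n' ! j" if "j < k - 1" "n \<le> n'" for n n' j
      using lift_Suc_mono_le[of "\<lambda>n. Q n ! j", OF cmono[OF that(1)] that(2)] .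
    have sumgrow: "n \<le> (\<Sum>j<k-1. Q n ! j)" for n
    proof (induction n)
      case 0 then show ?case by simp
    next
      case (Suc n)
      have "(\<Sum>j<k-1. Q n ! j) < (\<Sum>j<k-1. Q (Suc n) ! j)"
      proof (rule sum_strict_mono_ex1)
        show "\<forall>j\<in>{..<k-1}. Q n ! j \<le> Q (Suc n) ! j" using cmono by simp
        show "\<exists>j\<in>{..<k-1}. Q n ! j < Q (Suc n) ! j"
          using stepQ[of n] lenQ[of n] unfolding vec_prec_def by auto
      qed simp
      then show ?case using Suc by simp
    qed
    define T where "T = {j. j < k - 1 \<and> (\<forall>N. \<exists>n. N \<le> Q n ! j)}"
    have Tsub: "T \<subseteq> {..<k-1}" unfolding T_def by auto
    have inf: "eventually (\<lambda>n. N \<le> Q n ! j) sequentially" if "j \<in> T" for j N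
    proof -
      from that obtain n1 where n1: "N \<le> Q n1 ! j" and j: "j < k - 1" unfolding T_def by blast
      have "\<forall>n\<ge>n1. N \<le> Q n ! j" using n1 cmono'[OF j] order_trans by blast
      then show ?thesis unfolding eventually_sequentially by blast
    qed
    define U where "U = {j. j < k - 1 \<and> j \<notin> T}"
    have fU: "finite U" unfolding U_def by simp
    have evc: "\<exists>v. eventually (\<lambda>n. Q n ! j = v) sequentially" if "j \<in> U" for j
    proof -
      from that have j: "j < k - 1" and "j \<notin> T" unfolding U_def by auto
      then obtain N where N: "\<And>n. Q n ! j < N" unfolding T_def by (auto simp: not_le)
      have fin: "finite (range (\<lambda>n. Q n ! j))"
        by (rule finite_subset[of _ "{..<N}"]) (auto simp: N)
      define v where "v = Max (range (\<lambda>n. Q n ! j))"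
      have "v \<in> range (\<lambda>n. Q n ! j)" unfolding v_def using fin by (intro Max_in) auto
      then obtain n1 where n1: "Q n1 ! j = v" by blast
      have "\<forall>n\<ge>n1. Q n ! j = v"
      proof (intro allI impI)
        fix n assume "n1 \<le> n"
        then have "v \<le> Q n ! j" using cmono'[OF j] n1 by metis
        moreover have "Q n ! j \<le> v" unfolding v_def using fin by (intro Max_ge) auto
        ultimately show "Q n ! j = v" by simp
      qed
      then show ?thesis unfolding eventually_sequentially by blast
    qed
    then obtain vf where vf: "\<And>j. j \<in> U \<Longrightarrow> eventually (\<lambda>n. Q n ! j = vf j) sequentially"
      by metis
    have "eventually (\<lambda>n. \<forall>j\<in>U. Q n ! j = vf j) sequentially"
      using fU vf by (intro eventually_ball_finite) auto
    then obtain n0 where n0: "\<And>n j. n \<ge> n0 \<Longrightarrow> j \<in> U \<Longrightarrow> Q n ! j = vf j"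
      unfolding eventually_sequentially by blast
    have const: "Q n ! j = Q n0 ! j" if "n \<ge> n0" "j < k - 1" "j \<notin> T" for n j
    proof -
      have "j \<in> U" unfolding U_def using that by simp
      then show ?thesis using n0[OF that(1)] n0[of n0] by simp
    qed
    have Tne: "T \<noteq> {}"
    proof
      assume T0: "T = {}"
      define n where "n = n0 + (\<Sum>j<k-1. Q n0 ! j) + 1"
      have "(\<Sum>j<k-1. Q n ! j) = (\<Sum>j<k-1. Q n0 ! j)"
        using const[of n] T0 unfolding n_def by (intro sum.cong) auto
      moreover have "n \<le> (\<Sum>j<k-1. Q n ! j)" by (rule sumgrow)
      ultimately show False unfolding n_def by simp
    qed
    have e: "f p - L > 0" using fpL by simp
    obtain n where n: "\<bar>measure M (gcyl B (Q n)) - (\<Prod>l<k. measure M (cyl [B ! l]))\<bar> < f p - L"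
      using limit[OF S mix G lB k2 Tsub Tne const inf e] by blast
    then have "\<bar>f (Q n) - L\<bar> < f p - L" unfolding f_def L_def by simp
    moreover have "f (Q n) \<ge> f p" by (rule fmono)
    ultimately show False by linarith
  qed
qed

end
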